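(* Let $R,r>0$, $\Omega=B_R\cup B_{-r}$, $q_1=\frac1{2r}+\frac1{2R}$, and let $\varphi\in L^2_0(\partial\Omega)$. Then $$PU(\mathcal{K}^*_{\partial\Omega}[\varphi])(k)=\frac12e^{-|k|q_1}\begin{bmatrix}1&0\\0&-1\end{bmatrix}P\,(U\varphi)(k)\quad\text{for a.e. }k\in\mathbb{R}.$$
   Context: Identify $\mathbb{R}^2$ with $\mathbb{C}$ and let $\Psi(z)=1/z$. For $a\in\mathbb{R}\setminus\{0\}$, $B_a$ is the open disk of radius $|a|$ centered at $(a,0)$; $\partial\Omega=\partial B_R\cup\partial B_{-r}$. $\Psi$ maps $\partial B_R\setminus\{0\}$ onto $\{x=\frac1{2R}\}$ and $\partial B_{-r}\setminus\{0\}$ onto $\{x=-\frac1{2r}\}$. For $a>0$ let $h_a(y)=1/((2a)^{-2}+y^2)$. For $\varphi$ on $\partial\Omega$ put $\varphi_R(t)=\varphi(\Psi(\frac1{2R},t))$, $\varphi_{-r}(t)=\varphi(\Psi(-\frac1{2r},t))$; arclength is $d\sigma=h_R\,dt$ on $\partial B_R$ and $h_r\,dt$ on $\partial B_{-r}$. $L^2_0(\partial\Omega)=\{\varphi\in L^2(\partial\Omega,d\sigma):\int_{\partial\Omega}\varphi\,d\sigma=0\}$. $\mathcal{F}(g)(k)=\frac1{\sqrt{2\pi}}\int g(y)e^{-iky}dy$; $U\varphi=(\mathcal{F}(h_R\varphi_R),\mathcal{F}(h_r\varphi_{-r}))^T$; $P=\frac1{\sqrt2}\begin{bmatrix}-1&1\\1&1\end{bmatrix}$.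 With $\nu$ the outward normal of $\Omega$, the Neumann–Poincaré operator is given for $\varphi\in L^2(\partial\Omega)$ by $$\mathcal{K}^*_{\partial\Omega}[\varphi](\Psi(\tfrac1{2R},y))=\frac1{4\pi R}\int_{\partial\Omega}\varphi\,d\sigma-\frac1{2\pi h_R(y)}\int_{\mathbb{R}}\frac{q_1}{q_1^2+(y-t)^2}\varphi_{-r}(t)h_r(t)\,dt,$$ $$\mathcal{K}^*_{\partial\Omega}[\varphi](\Psi(-\tfrac1{2r},y))=\frac1{4\pi r}\int_{\partial\Omega}\varphi\,d\sigma-\frac1{2\pi h_r(y)}\int_{\mathbb{R}}\frac{q_1}{q_1^2+(y-t)^2}\varphi_R(t)h_R(t)\,dt.$$ *)

theory Defs
  imports "HOL-Analysis.Analysis"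
begin

definition Psi :: "real \<Rightarrow> real \<Rightarrow> complex" where
  "Psi x t = 1 / Complex x t"

definition h :: "real \<Rightarrow> real \<Rightarrow> real" where
  "h a y = 1 / ((1 / (2 * a))^2 + y^2)"

definition phiR :: "real \<Rightarrow> (complex \<Rightarrow> complex) \<Rightarrow> real \<Rightarrow> complex" where
  "phiR R \<phi> t = \<phi> (Psi (1 / (2 * R)) t)"

definition phir :: "real \<Rightarrow> (complex \<Rightarrow> complex) \<Rightarrow> real \<Rightarrow> complex" where
  "phir r \<phi> t = \<phi> (Psi (- 1 / (2 * r)) t)"

text \<open>Integral over the boundary with respect to arclength d sigma
  (d sigma = h_R dt on dB_R and h_r dt on dB_{-r}).\<close>
definition bdry_int :: "real \<Rightarrow> real \<Rightarrow> (complex \<Rightarrow> complex) \<Rightarrow> complex" where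
  "bdry_int R r \<phi> =
     (\<integral>t. phiR R \<phi> t * complex_of_real (h R t) \<partial>lborel)
   + (\<integral>t. phir r \<phi> t * complex_of_real (h r t) \<partial>lborel)"

definition L2_bdry :: "real \<Rightarrow> real \<Rightarrow> (complex \<Rightarrow> complex) \<Rightarrow> bool" where
  "L2_bdry R r \<phi> \<longleftrightarrow>
     phiR R \<phi> \<in> borel_measurable lborel \<and> phir r \<phi> \<in> borel_measurable lborel \<and>
     integrable lborel (\<lambda>t. (cmod (phiR R \<phi> t))\<^sup>2 * h R t) \<and>
     integrable lborel (\<lambda>t. (cmod (phir r \<phi> t))\<^sup>2 * h r t)"

definition L2_0_bdry :: "real \<Rightarrow> real \<Rightarrow> (complex \<Rightarrow> complex) \<Rightarrow> bool" where
  "L2_0_bdry R r \<phi> \<longleftrightarrow> L2_bdry R r \<phi> \<and> bdry_int R r \<phi> = 0"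

text \<open>Neumann--Poincare operator K^* on dOmega, dOmega = dB_R \<union> dB_{-r}
  (B_a = open disc of radius |a| centred at (a,0)), via the given formula.
  The point z on dB_R - {0} equals Psi(1/(2R), y) with y = Im(1/z);
  similarly on dB_{-r} - {0}.  The value at 0 (a null set) is irrelevant.\<close>
definition Kstar :: "real \<Rightarrow> real \<Rightarrow> (complex \<Rightarrow> complex) \<Rightarrow> complex \<Rightarrow> complex" where
  "Kstar R r \<phi> z =
     (let q1 = 1 / (2 * r) + 1 / (2 * R); y = Im (1 / z) in
      if z \<in> sphere (complex_of_real R) R - {0} then
        bdry_int R r \<phi> / complex_of_real (4 * pi * R)
        - (\<integral>t. complex_of_real (q1 / (q1\<^sup>2 + (y - t)\<^sup>2)) * phir r \<phi> t
                  * complex_of_real (h r t) \<partial>lborel) / complex_of_real (2 * pi * h R y)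
      else if z \<in> sphere (complex_of_real (- r)) r - {0} then
        bdry_int R r \<phi> / complex_of_real (4 * pi * r)
        - (\<integral>t. complex_of_real (q1 / (q1\<^sup>2 + (y - t)\<^sup>2)) * phiR R \<phi> t
                  * complex_of_real (h R t) \<partial>lborel) / complex_of_real (2 * pi * h r y)
      else 0)"

definition fourier :: "(real \<Rightarrow> complex) \<Rightarrow> real \<Rightarrow> complex" where
  "fourier g k = (\<integral>y. g y * exp (- \<i> * complex_of_real (k * y)) \<partial>lborel)
                 / complex_of_real (sqrt (2 * pi))"

definition U :: "real \<Rightarrow> real \<Rightarrow> (complex \<Rightarrow> complex) \<Rightarrow> real \<Rightarrow> complex ^ 2" where
  "U R r \<phi> k = vector
     [fourier (\<lambda>t. complex_of_real (h R t) * phiR R \<phi> t) k,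
      fourier (\<lambda>t. complex_of_real (h r t) * phir r \<phi> t) k]"

definition Pmat :: "complex ^ 2 ^ 2" where
  "Pmat = (\<chi> i j. complex_of_real (1 / sqrt 2) *
            (vector [vector [-1, 1], vector [1, 1]] :: complex ^ 2 ^ 2) $ i $ j)"

definition Dmat :: "complex ^ 2 ^ 2" where
  "Dmat = vector [vector [1, 0], vector [0, -1]]"

end

theory Submission
  imports Defs "HOL-Probability.Sinc_Integral"
begin


lemma exp_half_line:
  fixes w :: complex
  assumes w: "Re w > 0"
  shows "set_integrable lborel {0<..} (\<lambda>k::real. exp (- (w * of_real k)))"
    and "(LINT k:{0<..}|lborel. exp (- (w * of_real k))) = 1 / w"
proof -
  have w0: "w \<noteq> 0" using w by auto
  have i0: "set_integrable lborel {0<..} (\<lambda>x::real. exp (-(x * Re w)))"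
    using integrable_I0i_exp_mscale[OF w] .
  show si: "set_integrable lborel {0<..} (\<lambda>k::real. exp (- (w * of_real k)))"
    unfolding set_integrable_def
  proof (rule Bochner_Integration.integrable_bound)
    show "integrable lborel (\<lambda>x. indicator {0<..} x *\<^sub>R exp (-(x * Re w)))"
      using i0 unfolding set_integrable_def .
    show "(\<lambda>x. indicator {0<..} x *\<^sub>R exp (- (w * complex_of_real x))) \<in> borel_measurable lborel"
      by measurable
    show "AE x in lborel. norm (indicator {0<..} x *\<^sub>R exp (- (w * complex_of_real x)))
            \<le> norm (indicator {0<..} x *\<^sub>R exp (-(x * Re w)))"
      by (auto simp: indicator_def mult.commute)
  qed
  let ?F = "\<lambda>k::real. - exp (- (w * of_real k)) / w"
  have "(LBINT k=ereal 0..\<infinity>. exp (- (w * of_real k))) = 0 - ?F 0"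
  proof (rule interval_integral_FTC_integrable)
    show "ereal 0 < \<infinity>" by simp
    show "(?F has_vector_derivative exp (- (w * of_real x))) (at x)" for x
    proof -
      have "((\<lambda>z. - exp (- (w * z)) / w) has_field_derivative exp (- (w * of_real x))) (at (of_real x))"
        using w0 by (auto intro!: derivative_eq_intros)
      from has_vector_derivative_real_field[OF this] show ?thesis .
    qed
    show "isCont (\<lambda>x. exp (- (w * of_real x))) x" for x
      by (intro continuous_intros)
    show "set_integrable lborel (einterval (ereal 0) \<infinity>) (\<lambda>k::real. exp (- (w * of_real k)))"
      using si by (simp add: einterval_def greaterThan_def)
    show "((?F \<circ> real_of_ereal) \<longlongrightarrow> ?F 0) (at_right (ereal 0))"
      unfolding ereal_tendsto_simps using w0 by (intro tendsto_intros continuous_intros)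
    have *: "((\<lambda>k::real. exp (- (w * of_real k))) \<longlongrightarrow> 0) at_top"
    proof (rule tendsto_norm_zero_cancel)
      have "filterlim (\<lambda>k. Re w * k) at_top at_top"
        by (rule filterlim_tendsto_pos_mult_at_top[OF tendsto_const w filterlim_ident])
      then have "filterlim (\<lambda>k. - (Re w * k)) at_bot at_top"
        by (simp add: filterlim_uminus_at_bot)
      then have "((\<lambda>k::real. exp (- (Re w * k))) \<longlongrightarrow> 0) at_top"
        by (rule exp_at_bot[THEN filterlim_compose])
      then show "((\<lambda>k::real. norm (exp (- (w * of_real k)))) \<longlongrightarrow> 0) at_top"
        by (simp add: mult.commute)
    qed
    show "((?F \<circ> real_of_ereal) \<longlongrightarrow> 0) (at_left \<infinity>)"
      unfolding ereal_tendsto_simps using tendsto_divide[OF tendsto_minus[OF *] tendsto_const[of w]] w0 by simp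
  qed
  then show "(LINT k:{0<..}|lborel. exp (- (w * of_real k))) = 1 / w"
    by (simp add: interval_integral_to_infinity_eq)
qed


lemma exp_abs_ft:
  fixes a x :: real
  assumes a: "a > 0"
  shows "integrable lborel (\<lambda>k. complex_of_real (exp (- a * \<bar>k\<bar>)) * exp (\<i> * complex_of_real (k * x)))"
    and "(\<integral>k. complex_of_real (exp (- a * \<bar>k\<bar>)) * exp (\<i> * complex_of_real (k * x)) \<partial>lborel)
          = complex_of_real (2 * a / (a\<^sup>2 + x\<^sup>2))"
proof -
  define w1 where "w1 = Complex a (- x)"
  define w2 where "w2 = Complex a x"
  have rw1: "Re w1 > 0" and rw2: "Re w2 > 0" using a by (auto simp: w1_def w2_def)
  let ?f = "\<lambda>k. complex_of_real (exp (- a * \<bar>k\<bar>)) * exp (\<i> * complex_of_real (k * x))"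
  let ?g1 = "\<lambda>k::real. exp (- (w1 * of_real k))"
  let ?g2 = "\<lambda>k::real. exp (- (w2 * of_real k))"
  let ?G = "\<lambda>k. indicator {0<..} k *\<^sub>R ?g1 k + indicator {0<..} (0 + (-1) * k) *\<^sub>R ?g2 (0 + (-1) * k)"
  have fG: "?f k = ?G k" if "k \<noteq> 0" for k
  proof (cases "k > 0")
    case True
    have "?f k = complex_of_real (exp (- a * k)) * exp (\<i> * complex_of_real (k * x))"
      using True by simp
    also have "\<dots> = exp (of_real (- a * k)) * exp (\<i> * complex_of_real (k * x))"
      by (simp only: exp_of_real)
    also have "\<dots> = exp (of_real (- a * k) + \<i> * complex_of_real (k * x))"
      by (simp only: exp_add)
    also have "of_real (- a * k) + \<i> * complex_of_real (k * x) = - (w1 * of_real k)"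
      by (simp add: w1_def complex_eq_iff)
    finally show ?thesis using True by (simp add: indicator_def)
  next
    case False
    with that have k: "k < 0" by simp
    have "?f k = complex_of_real (exp (a * k)) * exp (\<i> * complex_of_real (k * x))"
      using k by simp
    also have "\<dots> = exp (of_real (a * k)) * exp (\<i> * complex_of_real (k * x))"
      by (simp only: exp_of_real)
    also have "\<dots> = exp (of_real (a * k) + \<i> * complex_of_real (k * x))"
      by (simp only: exp_add)
    also have "of_real (a * k) + \<i> * complex_of_real (k * x) = - (w2 * of_real (-k))"
      by (simp add: w2_def complex_eq_iff)
    finally show ?thesis using k by (simp add: indicator_def)
  qed
  have ae: "AE k in lborel. ?f k = ?G k"
    using AE_lborel_singleton[of 0] by eventually_elim (use fG in auto)
  have i1: "integrable lborel (\<lambda>k. indicator {0<..} k *\<^sub>R ?g1 k)"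
    using exp_half_line(1)[OF rw1] unfolding set_integrable_def .
  have i2': "integrable lborel (\<lambda>k. indicator {0<..} k *\<^sub>R ?g2 k)"
    using exp_half_line(1)[OF rw2] unfolding set_integrable_def .
  have i2: "integrable lborel (\<lambda>k. indicator {0<..} (0 + (-1) * k) *\<^sub>R ?g2 (0 + (-1) * k))"
    using lborel_integrable_real_affine_iff[of "-1" "\<lambda>k. indicator {0<..} k *\<^sub>R ?g2 k" 0] i2' by simp
  have iG: "integrable lborel ?G" using Bochner_Integration.integrable_add[OF i1 i2] by simp
  show "integrable lborel ?f"
    using integrable_cong_AE[OF _ _ ae] iG by (simp add: borel_measurable_integrable)
  have "(\<integral>k. ?f k \<partial>lborel) = (\<integral>k. ?G k \<partial>lborel)"
    by (rule integral_cong_AE) (use ae in auto)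
  also have "\<dots> = (\<integral>k. indicator {0<..} k *\<^sub>R ?g1 k \<partial>lborel)
      + (\<integral>k. indicator {0<..} (0 + (-1) * k) *\<^sub>R ?g2 (0 + (-1) * k) \<partial>lborel)"
    by (rule Bochner_Integration.integral_add[OF i1 i2])
  also have "(\<integral>k. indicator {0<..} (0 + (-1) * k) *\<^sub>R ?g2 (0 + (-1) * k) \<partial>lborel)
        = (\<integral>k. indicator {0<..} k *\<^sub>R ?g2 k \<partial>lborel)"
    using lborel_integral_real_affine[of "-1" "\<lambda>k. indicator {0<..} k *\<^sub>R ?g2 k" 0] by simp
  also have "(\<integral>k. indicator {0<..} k *\<^sub>R ?g2 k \<partial>lborel) = 1 / w2"
    using exp_half_line(2)[OF rw2] unfolding set_lebesgue_integral_def .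
  also have "(\<integral>k. indicator {0<..} k *\<^sub>R ?g1 k \<partial>lborel) = 1 / w1"
    using exp_half_line(2)[OF rw1] unfolding set_lebesgue_integral_def .
  also have "1 / w1 + 1 / w2 = complex_of_real (2 * a / (a\<^sup>2 + x\<^sup>2))"
  proof -
    have "w1 * w2 = complex_of_real (a\<^sup>2 + x\<^sup>2)" by (simp add: w1_def w2_def complex_eq_iff power2_eq_square)
    moreover have "w1 + w2 = complex_of_real (2 * a)" by (simp add: w1_def w2_def complex_eq_iff)
    moreover have "w1 \<noteq> 0" "w2 \<noteq> 0" using rw1 rw2 by auto
    ultimately show ?thesis
      by (simp add: field_simps)
  qed
  finally show "(\<integral>k. ?f k \<partial>lborel) = complex_of_real (2 * a / (a\<^sup>2 + x\<^sup>2))" .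
qed


lemma exp_abs_integrable:
  assumes a: "a > (0::real)"
  shows "integrable lborel (\<lambda>k. exp (- a * \<bar>k\<bar>))"
proof -
  have "integrable lborel (\<lambda>k. complex_of_real (exp (- a * \<bar>k\<bar>)))"
    using exp_abs_ft(1)[OF a, of 0] by simp
  then show ?thesis by (simp add: complex_of_real_integrable_eq)
qed

lemma aux1: "complex_of_real (a * c) * E = complex_of_real a * E * complex_of_real (2 * c) / 2"
  by simp

lemma aux2: "complex_of_real a * complex_of_real (2 * c) = complex_of_real (2 * (a * c))"
  by simp

lemma damped_identity:
  fixes q e k0 :: real
  assumes q: "q > 0" and e: "e > 0"
  shows "(\<integral>x. complex_of_real (exp (- e * \<bar>x\<bar>) * (q / (q\<^sup>2 + x\<^sup>2))) * exp (- \<i> * complex_of_real (k0 * x)) \<partial>lborel)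
       = complex_of_real (\<integral>k. exp (- q * \<bar>k\<bar>) * (e / (e\<^sup>2 + (k - k0)\<^sup>2)) \<partial>lborel)"
proof -
  define H where "H = (\<lambda>x k. complex_of_real (exp (- e * \<bar>x\<bar>)) * complex_of_real (exp (- q * \<bar>k\<bar>))
                         * exp (\<i> * complex_of_real (x * (k - k0))))"
  have Hm: "(\<lambda>(x, k). H x k) \<in> borel_measurable (lborel \<Otimes>\<^sub>M lborel)"
    unfolding H_def by measurable
  have ie: "integrable lborel (\<lambda>x. exp (- e * \<bar>x\<bar>))" using exp_abs_integrable[OF e] .
  have iq: "integrable lborel (\<lambda>x. exp (- q * \<bar>x\<bar>))" using exp_abs_integrable[OF q] .
  have nH: "norm (H x k) = exp (- e * \<bar>x\<bar>) * exp (- q * \<bar>k\<bar>)" for x k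
    unfolding H_def by (simp add: norm_mult)
  have intH: "integrable (lborel \<Otimes>\<^sub>M lborel) (\<lambda>(x, k). H x k)"
  proof (rule lborel_pair.Fubini_integrable)
    show "(\<lambda>(x, k). H x k) \<in> borel_measurable (lborel \<Otimes>\<^sub>M lborel)" by (rule Hm)
    show "integrable lborel (\<lambda>x. \<integral>y. norm (case (x, y) of (x, k) \<Rightarrow> H x k) \<partial>lborel)"
      using ie by (simp add: nH)
    show "AE x in lborel. integrable lborel (\<lambda>y. case (x, y) of (x, k) \<Rightarrow> H x k)"
    proof (rule AE_I2)
      fix x
      show "integrable lborel (\<lambda>y. case (x, y) of (x, k) \<Rightarrow> H x k)"
      proof (rule Bochner_Integration.integrable_bound[where f = "\<lambda>k. exp (- e * \<bar>x\<bar>) * exp (- q * \<bar>k\<bar>)"])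
        show "integrable lborel (\<lambda>k. exp (- e * \<bar>x\<bar>) * exp (- q * \<bar>k\<bar>))" using iq by simp
        show "(\<lambda>y. case (x, y) of (x, k) \<Rightarrow> H x k) \<in> borel_measurable lborel"
          using measurable_Pair2[OF Hm, of x] by simp
      qed (simp add: nH)
    qed
  qed
  have inner1: "(\<integral>k. H x k \<partial>lborel) = complex_of_real (exp (- e * \<bar>x\<bar>)) * exp (- \<i> * complex_of_real (k0 * x))
                   * complex_of_real (2 * q / (q\<^sup>2 + x\<^sup>2))" for x
  proof -
    have "H x k = (complex_of_real (exp (- e * \<bar>x\<bar>)) * exp (- \<i> * complex_of_real (k0 * x)))
                 * (complex_of_real (exp (- q * \<bar>k\<bar>)) * exp (\<i> * complex_of_real (k * x)))" for k
    proof -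
      have "exp (\<i> * complex_of_real (x * (k - k0))) = exp (- \<i> * complex_of_real (k0 * x)) * exp (\<i> * complex_of_real (k * x))"
        by (simp add: exp_add[symmetric] algebra_simps)
      then show ?thesis unfolding H_def by (simp add: ac_simps)
    qed
    then have "(\<integral>k. H x k \<partial>lborel) = (complex_of_real (exp (- e * \<bar>x\<bar>)) * exp (- \<i> * complex_of_real (k0 * x)))
                 * (\<integral>k. complex_of_real (exp (- q * \<bar>k\<bar>)) * exp (\<i> * complex_of_real (k * x)) \<partial>lborel)"
      by simp
    then show ?thesis using exp_abs_ft(2)[OF q, of x] by simp
  qed
  have inner2: "(\<integral>x. H x k \<partial>lborel) = complex_of_real (exp (- q * \<bar>k\<bar>)) * complex_of_real (2 * e / (e\<^sup>2 + (k - k0)\<^sup>2))" for k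
  proof -
    have "H x k = complex_of_real (exp (- q * \<bar>k\<bar>))
                 * (complex_of_real (exp (- e * \<bar>x\<bar>)) * exp (\<i> * complex_of_real (x * (k - k0))))" for x
      unfolding H_def by (simp add: ac_simps)
    then have "(\<integral>x. H x k \<partial>lborel) = complex_of_real (exp (- q * \<bar>k\<bar>))
                 * (\<integral>x. complex_of_real (exp (- e * \<bar>x\<bar>)) * exp (\<i> * complex_of_real (x * (k - k0))) \<partial>lborel)"
      by simp
    then show ?thesis using exp_abs_ft(2)[OF e, of "k - k0"] by simp
  qed
  have "(\<integral>x. complex_of_real (exp (- e * \<bar>x\<bar>) * (q / (q\<^sup>2 + x\<^sup>2))) * exp (- \<i> * complex_of_real (k0 * x)) \<partial>lborel)
      = (\<integral>x. (\<integral>k. H x k \<partial>lborel) / 2 \<partial>lborel)"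
  proof (rule Bochner_Integration.integral_cong)
    fix x
    have r: "2 * q / (q\<^sup>2 + x\<^sup>2) = 2 * (q / (q\<^sup>2 + x\<^sup>2))" by simp
    show "complex_of_real (exp (- e * \<bar>x\<bar>) * (q / (q\<^sup>2 + x\<^sup>2))) * exp (- \<i> * complex_of_real (k0 * x))
      = (\<integral>k. H x k \<partial>lborel) / 2"
      unfolding inner1 r by (rule aux1)
  qed simp
  also have "\<dots> = (\<integral>x. (\<integral>k. H x k \<partial>lborel) \<partial>lborel) / 2" by simp
  also have "(\<integral>x. (\<integral>k. H x k \<partial>lborel) \<partial>lborel) = (\<integral>k. (\<integral>x. H x k \<partial>lborel) \<partial>lborel)"
    using lborel_pair.Fubini_integral[OF intH] by simp
  also have "\<dots> = (\<integral>k. complex_of_real (2 * (exp (- q * \<bar>k\<bar>) * (e / (e\<^sup>2 + (k - k0)\<^sup>2)))) \<partial>lborel)"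
  proof (rule Bochner_Integration.integral_cong)
    fix k
    have r: "2 * e / (e\<^sup>2 + (k - k0)\<^sup>2) = 2 * (e / (e\<^sup>2 + (k - k0)\<^sup>2))" by simp
    show "(\<integral>x. H x k \<partial>lborel) = complex_of_real (2 * (exp (- q * \<bar>k\<bar>) * (e / (e\<^sup>2 + (k - k0)\<^sup>2))))"
      unfolding inner2 r by (rule aux2)
  qed simp
  also have "\<dots> / 2 = complex_of_real (\<integral>k. exp (- q * \<bar>k\<bar>) * (e / (e\<^sup>2 + (k - k0)\<^sup>2)) \<partial>lborel)"
    by (simp only: integral_complex_of_real integral_mult_right_zero) simp
  finally show ?thesis .
qed


lemma norm_cexp_aux: "norm (complex_of_real c * exp (- \<i> * complex_of_real t)) = \<bar>c\<bar>"
  by (simp add: norm_mult)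

lemma lorentz_int:
  assumes q: "q > (0::real)"
  shows "integrable lborel (\<lambda>x. q / (q\<^sup>2 + x\<^sup>2))"
    and "(\<integral>x. q / (q\<^sup>2 + x\<^sup>2) \<partial>lborel) = pi"
proof -
  have i1: "integrable lborel (\<lambda>x. inverse (1 + x^2) :: real)"
    using integrable_inverse_1_plus_square by (simp add: set_integrable_def einterval_def)
  have v1: "(\<integral>x. inverse (1 + x^2) \<partial>lborel) = (pi::real)"
    using LBINT_inverse_1_plus_square
    by (simp add: interval_lebesgue_integral_def set_lebesgue_integral_def einterval_def)
  have eq: "q / (q\<^sup>2 + x\<^sup>2) = inverse (1 + (0 + (1/q) * x)^2) / q" for x
  proof -
    have p: "q\<^sup>2 + x\<^sup>2 > 0" using q by (simp add: add_pos_nonneg)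
    have p2: "q*(q*q) + q*(x*x) > 0" using q p by (simp add: power2_eq_square flip: distrib_left)
    have "1 + (0 + (1/q) * x)^2 = (q\<^sup>2 + x\<^sup>2) / q\<^sup>2" using q by (simp add: field_simps power2_eq_square)
    then show ?thesis using q p p2 by (simp add: field_simps power2_eq_square)
  qed
  have i2: "integrable lborel (\<lambda>x. inverse (1 + (0 + (1/q) * x)^2) :: real)"
    using lborel_integrable_real_affine_iff[of "1/q" "\<lambda>x. inverse (1 + x^2) :: real" 0] q i1 by simp
  show "integrable lborel (\<lambda>x. q / (q\<^sup>2 + x\<^sup>2))"
    unfolding eq by (intro integrable_divide i2)
  have "(\<integral>x. q / (q\<^sup>2 + x\<^sup>2) \<partial>lborel) = \<bar>q\<bar> *\<^sub>R (\<integral>x. q / (q\<^sup>2 + (0 + q * x)\<^sup>2) \<partial>lborel)"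
    using q by (intro lborel_integral_real_affine) simp
  also have "(\<integral>x. q / (q\<^sup>2 + (0 + q * x)\<^sup>2) \<partial>lborel) = (\<integral>x. inverse (1 + x^2) / q \<partial>lborel)"
  proof (rule Bochner_Integration.integral_cong)
    fix x :: real
    have d: "1 + x\<^sup>2 > 0" by (simp add: add_pos_nonneg)
    have "q\<^sup>2 + (0 + q * x)\<^sup>2 = q\<^sup>2 * (1 + x\<^sup>2)" by (simp add: power2_eq_square algebra_simps)
    then show "q / (q\<^sup>2 + (0 + q * x)\<^sup>2) = inverse (1 + x^2) / q"
      using q d by (simp add: inverse_eq_divide power2_eq_square)
  qed simp
  also have "\<bar>q\<bar> *\<^sub>R \<dots> = q * (\<integral>x. inverse (1 + x^2) / q \<partial>lborel)"
    using q by simp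
  also have "\<dots> = pi" using q v1 by simp
  finally show "(\<integral>x. q / (q\<^sup>2 + x\<^sup>2) \<partial>lborel) = pi" .
qed

lemma poisson_ft:
  fixes q k0 :: real
  assumes q: "q > 0"
  shows "integrable lborel (\<lambda>x. complex_of_real (q / (q\<^sup>2 + x\<^sup>2)) * exp (- \<i> * complex_of_real (k0 * x)))"
    and "(\<integral>x. complex_of_real (q / (q\<^sup>2 + x\<^sup>2)) * exp (- \<i> * complex_of_real (k0 * x)) \<partial>lborel)
          = complex_of_real (pi * exp (- q * \<bar>k0\<bar>))"
proof -
  define e where "e = (\<lambda>n::nat. inverse (real (Suc n)))"
  have e0: "e n > 0" for n by (simp add: e_def)
  have elim: "e \<longlonglongrightarrow> 0" unfolding e_def by (rule LIMSEQ_inverse_real_of_nat)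
  let ?P = "\<lambda>x::real. q / (q\<^sup>2 + x\<^sup>2)"
  have Pnn: "?P x \<ge> 0" for x using q by simp
  let ?f = "\<lambda>x. complex_of_real (?P x) * exp (- \<i> * complex_of_real (k0 * x))"
  let ?s = "\<lambda>n x. complex_of_real (exp (- e n * \<bar>x\<bar>) * ?P x) * exp (- \<i> * complex_of_real (k0 * x))"
  have iP: "integrable lborel ?P" using lorentz_int(1)[OF q] .
  have fm: "?f \<in> borel_measurable lborel" by measurable
  have sm: "?s n \<in> borel_measurable lborel" for n by measurable
  have lim: "AE x in lborel. (\<lambda>n. ?s n x) \<longlonglongrightarrow> ?f x"
  proof (rule AE_I2)
    fix x
    have "(\<lambda>n. exp (- e n * \<bar>x\<bar>) * ?P x) \<longlonglongrightarrow> exp (- 0 * \<bar>x\<bar>) * ?P x"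
      by (intro tendsto_intros elim)
    then have "(\<lambda>n. exp (- e n * \<bar>x\<bar>) * ?P x) \<longlonglongrightarrow> ?P x" by simp
    then show "(\<lambda>n. ?s n x) \<longlonglongrightarrow> ?f x"
      by (intro tendsto_intros)
  qed
  have bound: "AE x in lborel. norm (?s n x) \<le> ?P x" for n
  proof (rule AE_I2)
    fix x
    have "norm (?s n x) = \<bar>exp (- e n * \<bar>x\<bar>) * ?P x\<bar>"
      by (rule norm_cexp_aux)
    also have "\<dots> = exp (- e n * \<bar>x\<bar>) * ?P x"
      using q by (simp add: abs_mult)
    also have "\<dots> \<le> 1 * ?P x"
      using e0[of n] Pnn[of x] by (intro mult_right_mono) auto
    finally show "norm (?s n x) \<le> ?P x" by simp
  qed
  show "integrable lborel ?f"
    by (rule integrable_dominated_convergence[OF fm sm iP lim bound])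
  have L1: "(\<lambda>n. \<integral>x. ?s n x \<partial>lborel) \<longlonglongrightarrow> (\<integral>x. ?f x \<partial>lborel)"
    by (rule integral_dominated_convergence[OF fm sm iP lim bound])
  let ?J = "\<lambda>n. \<integral>k. exp (- q * \<bar>k\<bar>) * (e n / ((e n)\<^sup>2 + (k - k0)\<^sup>2)) \<partial>lborel"
  let ?hh = "\<lambda>n v. exp (- q * \<bar>k0 + e n * v\<bar>) * (1 / (1\<^sup>2 + v\<^sup>2))"
  have Jeq: "?J n = (\<integral>v. ?hh n v \<partial>lborel)" for n
  proof -
    have "?J n = \<bar>e n\<bar> *\<^sub>R (\<integral>v. exp (- q * \<bar>k0 + e n * v\<bar>) * (e n / ((e n)\<^sup>2 + (k0 + e n * v - k0)\<^sup>2)) \<partial>lborel)"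
      using e0[of n] by (intro lborel_integral_real_affine) simp
    also have "\<dots> = (\<integral>v. e n * (exp (- q * \<bar>k0 + e n * v\<bar>) * (e n / ((e n)\<^sup>2 + (k0 + e n * v - k0)\<^sup>2))) \<partial>lborel)"
      using e0[of n] by (simp only: integral_mult_right_zero real_scaleR_def abs_of_pos)
    also have "\<dots> = (\<integral>v. ?hh n v \<partial>lborel)"
    proof (rule Bochner_Integration.integral_cong)
      fix v :: real
      have en: "e n \<noteq> 0" using e0[of n] by simp
      have d: "1 + v\<^sup>2 > 0" by (simp add: add_pos_nonneg)
      have "e n * (e n / ((e n)\<^sup>2 + (k0 + e n * v - k0)\<^sup>2)) = 1 / (1\<^sup>2 + v\<^sup>2)"
      proof -
        have "(e n)\<^sup>2 + (k0 + e n * v - k0)\<^sup>2 = (e n)\<^sup>2 * (1 + v\<^sup>2)"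
          by (simp add: power2_eq_square algebra_simps)
        then show ?thesis using en d by (simp add: power2_eq_square)
      qed
      then show "e n * (exp (- q * \<bar>k0 + e n * v\<bar>) * (e n / ((e n)\<^sup>2 + (k0 + e n * v - k0)\<^sup>2))) = ?hh n v"
        by (metis mult.left_commute)
    qed simp
    finally show ?thesis .
  qed
  let ?hz = "\<lambda>v. exp (- q * \<bar>k0\<bar>) * (1 / (1\<^sup>2 + v\<^sup>2))"
  have i1: "integrable lborel (\<lambda>v::real. 1 / (1\<^sup>2 + v\<^sup>2))" using lorentz_int(1)[of 1] by simp
  have L2: "(\<lambda>n. \<integral>v. ?hh n v \<partial>lborel) \<longlonglongrightarrow> (\<integral>v. ?hz v \<partial>lborel)"
  proof (rule integral_dominated_convergence[where w = "\<lambda>v. 1 / (1\<^sup>2 + v\<^sup>2)"])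
    show "?hz \<in> borel_measurable lborel" by measurable
    show "?hh n \<in> borel_measurable lborel" for n by measurable
    show "integrable lborel (\<lambda>v::real. 1 / (1\<^sup>2 + v\<^sup>2))" by (rule i1)
    show "AE v in lborel. (\<lambda>n. ?hh n v) \<longlonglongrightarrow> ?hz v"
    proof (rule AE_I2)
      fix v
      have "(\<lambda>n. exp (- q * \<bar>k0 + e n * v\<bar>) * (1 / (1\<^sup>2 + v\<^sup>2))) \<longlonglongrightarrow> exp (- q * \<bar>k0 + 0 * v\<bar>) * (1 / (1\<^sup>2 + v\<^sup>2))"
        by (intro tendsto_intros elim)
      then show "(\<lambda>n. ?hh n v) \<longlonglongrightarrow> ?hz v" by simp
    qed
    show "AE v in lborel. norm (?hh n v) \<le> 1 / (1\<^sup>2 + v\<^sup>2)" for n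
    proof (rule AE_I2)
      fix v :: real
      have d: "1 + v\<^sup>2 > 0" by (simp add: add_pos_nonneg)
      have "exp (- q * \<bar>k0 + e n * v\<bar>) \<le> 1" using q by simp
      then show "norm (?hh n v) \<le> 1 / (1\<^sup>2 + v\<^sup>2)"
        using d by (simp add: divide_le_cancel)
    qed
  qed
  have g0v: "(\<integral>v. ?hz v \<partial>lborel) = pi * exp (- q * \<bar>k0\<bar>)"
    using lorentz_int(2)[of 1] by (simp only: integral_mult_right_zero) simp
  have L3: "(\<lambda>n. complex_of_real (?J n)) \<longlonglongrightarrow> complex_of_real (pi * exp (- q * \<bar>k0\<bar>))"
    unfolding Jeq using L2 g0v by (intro tendsto_of_real) simp
  have eqs: "(\<integral>x. ?s n x \<partial>lborel) = complex_of_real (?J n)" for n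
    using damped_identity[OF q e0[of n], of k0] .
  show "(\<integral>x. ?f x \<partial>lborel) = complex_of_real (pi * exp (- q * \<bar>k0\<bar>))"
    using L1 L3 unfolding eqs by (rule LIMSEQ_unique)
qed


lemma lorentz_shift:
  assumes q: "q > (0::real)"
  shows "integrable lborel (\<lambda>y. q / (q\<^sup>2 + (y - t)\<^sup>2))"
    and "(\<integral>y. q / (q\<^sup>2 + (y - t)\<^sup>2) \<partial>lborel) = pi"
proof -
  have "integrable lborel (\<lambda>y. q / (q\<^sup>2 + ((- t + 1 * y))\<^sup>2))"
    using lborel_integrable_real_affine_iff[of 1 "\<lambda>x. q / (q\<^sup>2 + x\<^sup>2)" "-t"] lorentz_int(1)[OF q] by simp
  then show "integrable lborel (\<lambda>y. q / (q\<^sup>2 + (y - t)\<^sup>2))" by simp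
  have "(\<integral>y. q / (q\<^sup>2 + (y - t)\<^sup>2) \<partial>lborel) = \<bar>1\<bar> *\<^sub>R (\<integral>y. q / (q\<^sup>2 + ((t + 1 * y) - t)\<^sup>2) \<partial>lborel)"
    by (rule lborel_integral_real_affine) simp
  then show "(\<integral>y. q / (q\<^sup>2 + (y - t)\<^sup>2) \<partial>lborel) = pi" using lorentz_int(2)[OF q] by simp
qed

lemma conv_ft:
  fixes q k :: real and g :: "real \<Rightarrow> complex"
  assumes q: "q > 0" and g: "integrable lborel g"
  shows "fourier (\<lambda>y. \<integral>t. complex_of_real (q / (q\<^sup>2 + (y - t)\<^sup>2)) * g t \<partial>lborel) k
       = complex_of_real (pi * exp (- q * \<bar>k\<bar>)) * fourier g k"
proof -
  have gm[measurable]: "g \<in> borel_measurable lborel" using g by (rule borel_measurable_integrable)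
  define F where "F = (\<lambda>t y. complex_of_real (q / (q\<^sup>2 + (y - t)\<^sup>2)) * g t * exp (- \<i> * complex_of_real (k * y)))"
  have Fm: "(\<lambda>(t, y). F t y) \<in> borel_measurable (lborel \<Otimes>\<^sub>M lborel)"
    unfolding F_def by measurable
  have nF: "norm (F t y) = norm (g t) * (q / (q\<^sup>2 + (y - t)\<^sup>2))" for t y
  proof -
    have "norm (F t y) = norm (complex_of_real (q / (q\<^sup>2 + (y - t)\<^sup>2)) * exp (- \<i> * complex_of_real (k * y))) * norm (g t)"
      unfolding F_def by (simp only: norm_mult ac_simps)
    also have "\<dots> = \<bar>q / (q\<^sup>2 + (y - t)\<^sup>2)\<bar> * norm (g t)" by (simp only: norm_cexp_aux)
    finally show ?thesis using q by simp
  qed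
  have intF: "integrable (lborel \<Otimes>\<^sub>M lborel) (\<lambda>(t, y). F t y)"
  proof (rule lborel_pair.Fubini_integrable)
    show "(\<lambda>(t, y). F t y) \<in> borel_measurable (lborel \<Otimes>\<^sub>M lborel)" by (rule Fm)
    have "(\<integral>y. norm (F t y) \<partial>lborel) = norm (g t) * pi" for t
      unfolding nF integral_mult_right_zero lorentz_shift(2)[OF q, of t] ..
    then show "integrable lborel (\<lambda>t. \<integral>y. norm (case (t, y) of (t, y) \<Rightarrow> F t y) \<partial>lborel)"
      using g by simp
    show "AE t in lborel. integrable lborel (\<lambda>y. case (t, y) of (t, y) \<Rightarrow> F t y)"
    proof (rule AE_I2)
      fix t
      show "integrable lborel (\<lambda>y. case (t, y) of (t, y) \<Rightarrow> F t y)"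
      proof (rule Bochner_Integration.integrable_bound[where f = "\<lambda>y. norm (g t) * (q / (q\<^sup>2 + (y - t)\<^sup>2))"])
        show "integrable lborel (\<lambda>y. norm (g t) * (q / (q\<^sup>2 + (y - t)\<^sup>2)))"
          using integrable_mult_right[OF lorentz_shift(1)[OF q, of t], of "norm (g t)"] .
        show "(\<lambda>y. case (t, y) of (t, y) \<Rightarrow> F t y) \<in> borel_measurable lborel"
          using measurable_Pair2[OF Fm, of t] by simp
      qed (use q in \<open>simp add: nF abs_mult\<close>)
    qed
  qed
  have inner: "(\<integral>y. F t y \<partial>lborel) = complex_of_real (pi * exp (- q * \<bar>k\<bar>)) * (g t * exp (- \<i> * complex_of_real (k * t)))" for t
  proof -
    have "(\<integral>y. F t y \<partial>lborel) = \<bar>1\<bar> *\<^sub>R (\<integral>u. F t (t + 1 * u) \<partial>lborel)"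
      by (rule lborel_integral_real_affine) simp
    also have "\<dots> = (\<integral>u. (g t * exp (- \<i> * complex_of_real (k * t))) *
                 (complex_of_real (q / (q\<^sup>2 + u\<^sup>2)) * exp (- \<i> * complex_of_real (k * u))) \<partial>lborel)"
    proof -
      have "F t (t + 1 * u) = (g t * exp (- \<i> * complex_of_real (k * t))) *
                 (complex_of_real (q / (q\<^sup>2 + u\<^sup>2)) * exp (- \<i> * complex_of_real (k * u)))" for u
      proof -
        have "exp (- \<i> * complex_of_real (k * (t + 1 * u))) = exp (- \<i> * complex_of_real (k * t)) * exp (- \<i> * complex_of_real (k * u))"
          by (simp add: exp_add[symmetric] algebra_simps)
        then show ?thesis unfolding F_def by (simp add: ac_simps)
      qed
      then show ?thesis by simp
    qed
    also have "\<dots> = (g t * exp (- \<i> * complex_of_real (k * t))) * complex_of_real (pi * exp (- q * \<bar>k\<bar>))"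
      by (simp only: integral_mult_right_zero poisson_ft(2)[OF q])
    finally show ?thesis by (simp only: ac_simps)
  qed
  have "(\<integral>y. (\<integral>t. complex_of_real (q / (q\<^sup>2 + (y - t)\<^sup>2)) * g t \<partial>lborel) * exp (- \<i> * complex_of_real (k * y)) \<partial>lborel)
      = (\<integral>y. (\<integral>t. F t y \<partial>lborel) \<partial>lborel)"
    unfolding F_def integral_mult_left_zero ..
  also have "\<dots> = (\<integral>t. (\<integral>y. F t y \<partial>lborel) \<partial>lborel)"
    by (rule lborel_pair.Fubini_integral[OF intF])
  also have "\<dots> = complex_of_real (pi * exp (- q * \<bar>k\<bar>)) * (\<integral>t. g t * exp (- \<i> * complex_of_real (k * t)) \<partial>lborel)"
    by (simp only: inner integral_mult_right_zero)
  finally show ?thesis unfolding fourier_def by simp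
qed


lemma final_alg:
  fixes A B c :: complex
  shows "Pmat *v vector [- (c * B), - (c * A)] = c *s (Dmat ** Pmat *v vector [A, B])"
  by (simp add: vec_eq_iff forall_2 matrix_vector_mult_def sum_2 Pmat_def Dmat_def
      matrix_matrix_mult_def algebra_simps)

lemma Psi_inv: "x \<noteq> 0 \<Longrightarrow> 1 / Psi x t = Complex x t"
  by (simp add: Psi_def)

lemma Psi_nz: "x \<noteq> 0 \<Longrightarrow> Psi x t \<noteq> 0"
proof -
  assume "x \<noteq> 0"
  then have "Complex x t \<noteq> 0" by (auto simp: complex_eq_iff)
  then show ?thesis by (simp add: Psi_def)
qed

lemma Psi_dist:
  fixes c x t :: real
  assumes x: "x \<noteq> 0"
  shows "(cmod (Psi x t - complex_of_real c))\<^sup>2 = (1 - 2 * c * x) / (x\<^sup>2 + t\<^sup>2) + c\<^sup>2"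
proof -
  define d where "d = x\<^sup>2 + t\<^sup>2"
  have d: "d > 0" using x by (simp add: d_def add_pos_nonneg)
  have P: "Psi x t = Complex (x / d) (- t / d)"
    by (simp add: Psi_def d_def complex_eq_iff Re_divide Im_divide power2_eq_square)
  have "(cmod (Psi x t - complex_of_real c))\<^sup>2 = (x / d - c)\<^sup>2 + (t / d)\<^sup>2"
    unfolding P cmod_power2 by simp
  also have "\<dots> = (x\<^sup>2 + t\<^sup>2) / d\<^sup>2 - 2 * c * x / d + c\<^sup>2"
    using d by (simp add: field_simps power2_eq_square)
  also have "\<dots> = d / d\<^sup>2 - 2 * c * x / d + c\<^sup>2" by (simp add: d_def)
  also have "\<dots> = (1 - 2 * c * x) / d + c\<^sup>2"
    using d by (simp add: field_simps power2_eq_square)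
  finally show ?thesis by (simp add: d_def)
qed


lemma sphere_R:
  assumes R: "R > 0"
  shows "Psi (1 / (2 * R)) t \<in> sphere (complex_of_real R) R - {0}"
proof -
  have x: "1 / (2 * R) \<noteq> 0" using R by simp
  have "(cmod (Psi (1 / (2 * R)) t - complex_of_real R))\<^sup>2 = R\<^sup>2"
    using Psi_dist[OF x, of t R] R by simp
  then have "cmod (Psi (1 / (2 * R)) t - complex_of_real R) = R"
    using R by (simp add: power2_eq_iff_nonneg)
  then show ?thesis using Psi_nz[OF x] by (simp add: dist_norm norm_minus_commute)
qed

lemma sphere_r:
  assumes r: "r > 0"
  shows "Psi (- 1 / (2 * r)) t \<in> sphere (complex_of_real (- r)) r - {0}"
proof -
  have x: "- 1 / (2 * r) \<noteq> 0" using r by simp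
  have "(cmod (Psi (- 1 / (2 * r)) t - complex_of_real (- r)))\<^sup>2 = r\<^sup>2"
    using Psi_dist[OF x, of t "- r"] r by simp
  then have "cmod (Psi (- 1 / (2 * r)) t - complex_of_real (- r)) = r"
    using r by (simp add: power2_eq_iff_nonneg)
  then have "cmod (complex_of_real (- r) - Psi (- 1 / (2 * r)) t) = r"
    by (subst norm_minus_commute)
  then show ?thesis using Psi_nz[OF x] by (simp only: mem_sphere dist_norm Diff_iff singleton_iff) simp
qed

lemma not_sphere_R:
  assumes R: "R > 0" and r: "r > 0"
  shows "Psi (- 1 / (2 * r)) t \<notin> sphere (complex_of_real R) R - {0}"
proof
  assume a: "Psi (- 1 / (2 * r)) t \<in> sphere (complex_of_real R) R - {0}"
  have x: "- 1 / (2 * r) \<noteq> 0" using r by simp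
  have d: "(- 1 / (2 * r))\<^sup>2 + t\<^sup>2 > 0" using r by (simp add: add_pos_nonneg)
  have "cmod (Psi (- 1 / (2 * r)) t - complex_of_real R) = R"
    using a by (simp add: dist_norm norm_minus_commute)
  then have "(1 - 2 * R * (- 1 / (2 * r))) / ((- 1 / (2 * r))\<^sup>2 + t\<^sup>2) + R\<^sup>2 = R\<^sup>2"
    using Psi_dist[OF x, of t R] by simp
  then have "(1 - 2 * R * (- 1 / (2 * r))) / ((- 1 / (2 * r))\<^sup>2 + t\<^sup>2) = 0" by simp
  moreover have "1 - 2 * R * (- 1 / (2 * r)) > 0" using R r by (simp add: field_simps)
  ultimately show False using d by simp
qed

lemma h_pos: "a > 0 \<Longrightarrow> h a y > 0"
  unfolding h_def by (simp add: add_pos_nonneg)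

lemma h_integrable:
  assumes a: "a > 0"
  shows "integrable lborel (h a)"
proof -
  define c where "c = 1 / (2 * a)"
  have c: "c > 0" using a by (simp add: c_def)
  have "h a y = 2 * a * (c / (c\<^sup>2 + y\<^sup>2))" for y
  proof -
    have "c\<^sup>2 + y\<^sup>2 > 0" using c by (simp add: add_pos_nonneg)
    moreover have "a * (c * 2) = 1" using a by (simp add: c_def)
    ultimately show ?thesis using a unfolding h_def c_def[symmetric] by (simp add: field_simps)
  qed
  then have "h a = (\<lambda>y. 2 * a * (c / (c\<^sup>2 + y\<^sup>2)))" by auto
  then show ?thesis using integrable_mult_right[OF lorentz_int(1)[OF c], of "2 * a"] by simp
qed

lemma weighted_integrable:
  fixes f :: "real \<Rightarrow> complex"
  assumes a: "a > 0" and fm: "f \<in> borel_measurable lborel"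
    and f2: "integrable lborel (\<lambda>t. (cmod (f t))\<^sup>2 * h a t)"
  shows "integrable lborel (\<lambda>t. f t * complex_of_real (h a t))"
proof (rule Bochner_Integration.integrable_bound[where f = "\<lambda>t. ((cmod (f t))\<^sup>2 * h a t + h a t) / 2"])
  show "integrable lborel (\<lambda>t. ((cmod (f t))\<^sup>2 * h a t + h a t) / 2)"
    using f2 h_integrable[OF a] by (intro integrable_divide Bochner_Integration.integrable_add)
  have [measurable]: "h a \<in> borel_measurable lborel" using h_integrable[OF a] by (rule borel_measurable_integrable)
  show "(\<lambda>t. f t * complex_of_real (h a t)) \<in> borel_measurable lborel" using fm by measurable
  show "AE t in lborel. norm (f t * complex_of_real (h a t)) \<le> norm (((cmod (f t))\<^sup>2 * h a t + h a t) / 2)"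
  proof (rule AE_I2)
    fix t
    have hp: "h a t > 0" by (rule h_pos[OF a])
    have "cmod (f t) \<le> ((cmod (f t))\<^sup>2 + 1) / 2"
      using sum_squares_ge_zero[of "cmod (f t) - 1" 0] by (simp add: power2_eq_square algebra_simps)
    then have "cmod (f t) * h a t \<le> ((cmod (f t))\<^sup>2 + 1) / 2 * h a t"
      using hp by (intro mult_right_mono) auto
    then show "norm (f t * complex_of_real (h a t)) \<le> norm (((cmod (f t))\<^sup>2 * h a t + h a t) / 2)"
      using hp by (simp add: norm_mult algebra_simps add_divide_distrib)
  qed
qed


lemma K_aux:
  fixes hh :: real and I b :: complex
  assumes "hh > 0"
  shows "complex_of_real hh * (0 / b - I / complex_of_real (2 * pi * hh)) = complex_of_real (- 1 / (2 * pi)) * I"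
  using assms by (simp add: field_simps)

lemma fourier_cmult: "fourier (\<lambda>t. c * g t) k = c * fourier g k"
  unfolding fourier_def by (simp add: ac_simps)

lemma comp_aux:
  fixes B :: complex and E :: real
  shows "complex_of_real (- 1 / (2 * pi)) * (complex_of_real (pi * E) * B) = - (complex_of_real (1 / 2 * E) * B)"
  by (simp add: field_simps)

theorem lemma4p2:
  fixes R r :: real and \<phi> :: "complex \<Rightarrow> complex"
  assumes "R > 0" and "r > 0"
    and "L2_0_bdry R r \<phi>"
  shows "AE k in lborel.
           Pmat *v U R r (Kstar R r \<phi>) k
         = (complex_of_real (1 / 2 * exp (- \<bar>k\<bar> * (1 / (2 * r) + 1 / (2 * R))))) *s
             (Dmat ** Pmat *v U R r \<phi> k)"
proof (rule AE_I2)
  fix k :: real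
  define q where "q = 1 / (2 * r) + 1 / (2 * R)"
  have R: "R > 0" and r: "r > 0" using assms by auto
  have q: "q > 0" using R r unfolding q_def by (intro add_pos_pos) simp_all
  have L2: "L2_bdry R r \<phi>" and b0: "bdry_int R r \<phi> = 0" using assms(3) by (auto simp: L2_0_bdry_def)
  have gR: "integrable lborel (\<lambda>t. phiR R \<phi> t * complex_of_real (h R t))"
    using L2 R by (intro weighted_integrable) (auto simp: L2_bdry_def)
  have gr: "integrable lborel (\<lambda>t. phir r \<phi> t * complex_of_real (h r t))"
    using L2 r by (intro weighted_integrable) (auto simp: L2_bdry_def)
  have xR: "1 / (2 * R) \<noteq> 0" and xr: "- 1 / (2 * r) \<noteq> 0" using R r by auto
  have KR: "complex_of_real (h R t) * phiR R (Kstar R r \<phi>) t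
      = complex_of_real (- 1 / (2 * pi)) *
        (\<integral>s. complex_of_real (q / (q\<^sup>2 + (t - s)\<^sup>2)) * (phir r \<phi> s * complex_of_real (h r s)) \<partial>lborel)" for t
  proof -
    have "phiR R (Kstar R r \<phi>) t = bdry_int R r \<phi> / complex_of_real (4 * pi * R)
        - (\<integral>s. complex_of_real (q / (q\<^sup>2 + (t - s)\<^sup>2)) * phir r \<phi> s * complex_of_real (h r s) \<partial>lborel)
          / complex_of_real (2 * pi * h R t)"
      unfolding phiR_def Kstar_def Let_def Psi_inv[OF xR] complex.sel if_P[OF sphere_R[OF R]] q_def ..
    moreover have "(\<lambda>s. complex_of_real (q / (q\<^sup>2 + (t - s)\<^sup>2)) * phir r \<phi> s * complex_of_real (h r s))
        = (\<lambda>s. complex_of_real (q / (q\<^sup>2 + (t - s)\<^sup>2)) * (phir r \<phi> s * complex_of_real (h r s)))"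
      by (rule ext) (rule mult.assoc)
    ultimately show ?thesis unfolding b0 by (simp only: K_aux[OF h_pos[OF R]])
  qed
  have Kr: "complex_of_real (h r t) * phir r (Kstar R r \<phi>) t
      = complex_of_real (- 1 / (2 * pi)) *
        (\<integral>s. complex_of_real (q / (q\<^sup>2 + (t - s)\<^sup>2)) * (phiR R \<phi> s * complex_of_real (h R s)) \<partial>lborel)" for t
  proof -
    have "phir r (Kstar R r \<phi>) t = bdry_int R r \<phi> / complex_of_real (4 * pi * r)
        - (\<integral>s. complex_of_real (q / (q\<^sup>2 + (t - s)\<^sup>2)) * phiR R \<phi> s * complex_of_real (h R s) \<partial>lborel)
          / complex_of_real (2 * pi * h r t)"
      unfolding phir_def Kstar_def Let_def Psi_inv[OF xr] complex.sel if_not_P[OF not_sphere_R[OF R r]]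
        if_P[OF sphere_r[OF r]] q_def ..
    moreover have "(\<lambda>s. complex_of_real (q / (q\<^sup>2 + (t - s)\<^sup>2)) * phiR R \<phi> s * complex_of_real (h R s))
        = (\<lambda>s. complex_of_real (q / (q\<^sup>2 + (t - s)\<^sup>2)) * (phiR R \<phi> s * complex_of_real (h R s)))"
      by (rule ext) (rule mult.assoc)
    ultimately show ?thesis unfolding b0 by (simp only: K_aux[OF h_pos[OF r]])
  qed
  have comR: "(\<lambda>t. phiR R \<phi> t * complex_of_real (h R t)) = (\<lambda>t. complex_of_real (h R t) * phiR R \<phi> t)"
    by (simp add: mult.commute)
  have comr: "(\<lambda>t. phir r \<phi> t * complex_of_real (h r t)) = (\<lambda>t. complex_of_real (h r t) * phir r \<phi> t)"
    by (simp add: mult.commute)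
  define A where "A = fourier (\<lambda>t. complex_of_real (h R t) * phiR R \<phi> t) k"
  define B where "B = fourier (\<lambda>t. complex_of_real (h r t) * phir r \<phi> t) k"
  have eE: "exp (- \<bar>k\<bar> * q) = exp (- q * \<bar>k\<bar>)" by (simp add: mult.commute)
  have U1: "fourier (\<lambda>t. complex_of_real (h R t) * phiR R (Kstar R r \<phi>) t) k
       = - (complex_of_real (1 / 2 * exp (- \<bar>k\<bar> * q)) * B)"
    unfolding KR fourier_cmult conv_ft[OF q gr] comr B_def[symmetric] eE by (rule comp_aux)
  have U2: "fourier (\<lambda>t. complex_of_real (h r t) * phir r (Kstar R r \<phi>) t) k
       = - (complex_of_real (1 / 2 * exp (- \<bar>k\<bar> * q)) * A)"
    unfolding Kr fourier_cmult conv_ft[OF q gR] comR A_def[symmetric] eE by (rule comp_aux)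
  show "Pmat *v U R r (Kstar R r \<phi>) k
         = (complex_of_real (1 / 2 * exp (- \<bar>k\<bar> * (1 / (2 * r) + 1 / (2 * R))))) *s
             (Dmat ** Pmat *v U R r \<phi> k)"
    unfolding U_def U1 U2 A_def[symmetric] B_def[symmetric] q_def[symmetric] by (rule final_alg)
qed

end
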